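(* Let $\mathcal{D}$ be a joint distribution of $(X, A, Y)$ with $A, Y \in \{0,1\}$ and $0 < \Pr_{\mathcal{D}}(A=0) < 1$. Let $g:\mathcal{X}\to\mathcal{Z}$ be a measurable encoder with $\mathcal{Z}\subseteq\mathbb{R}^{d}$ and $\sup_{z\in\mathcal{Z}}\|z\|\le R$, and let $Z=g(X)$. Let $\mathcal{F}_A$ be the set of all measurable functions $\mathcal{Z}\to\{0,1\}$. Define $\delta_{Y\mid A} := |\Pr_{\mathcal{D}_0}(Y=1) - \Pr_{\mathcal{D}_1}(Y=1)|$. Then for every measurable $h:\mathcal{Z}\to[0,1]$ with $\|h\|_L\le C$, $$\varepsilon_{Y\mid A=0}(h\circ g) + \varepsilon_{Y\mid A=1}(h\circ g) \;\ge\; \delta_{Y\mid A} - C\cdot W_1(g_\sharp\mathcal{D}_0, g_\sharp\mathcal{D}_1) \;\ge\; \delta_{Y\mid A} - 2RC\cdot \mathrm{Adv}_{\mathcal{D}}(\mathcal{F}_A).$$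
   Context: $\mathcal{D}_a$ denotes the conditional distribution of $\mathcal{D}$ given $A=a$. For a measurable map $g$, $g_\sharp\mathcal{D}$ is the pushforward $E'\mapsto \mathcal{D}(\{x: g(x)\in E'\})$; $g_\sharp\mathcal{D}_a$ is the law of $Z=g(X)$ given $A=a$. For distributions $P,P'$ on a metric space $\Omega$, $W_1(P,P') := \sup_{\|f\|_L\le 1}\left|\int f\,dP - \int f\,dP'\right|$, the supremum over real-valued $1$-Lipschitz functions, where $\|f\|_L$ is the Lipschitz constant ($\mathcal{Z}$ carries the Euclidean metric). The predictor $h(z)$ is interpreted as the predicted probability that $Y=1$, and the conditional cross-entropy error is $\varepsilon_{Y\mid A=a}(h\circ g) := \mathbb{E}_{\mathcal{D}}\big[-Y\ln h(g(X)) - (1-Y)\ln(1-h(g(X))) \,\big|\, A=a\big]$. The advantage of a class $\mathcal{F}_A$ of functions $\mathcal{Z}\to\{0,1\}$ is $\mathrm{Adv}_{\mathcal{D}}(\mathcal{F}_A) := \sup_{f\in\mathcal{F}_A}\left|\Pr_{\mathcal{D}_1}(f(Z)=1) - \Pr_{\mathcal{D}_0}(f(Z)=1)\right|$. *)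

theory Defs
  imports "HOL-Probability.Probability"
begin

definition cond_dist :: "'a measure \<Rightarrow> 'a set \<Rightarrow> 'a measure" where
  "cond_dist M S = density M (\<lambda>\<omega>. indicator S \<omega> / emeasure M S)"

definition xent :: "bool \<Rightarrow> real \<Rightarrow> ennreal" where
  "xent y p = (if y then (if p = 0 then \<infinity> else ennreal (- ln p))
               else (if p = 1 then \<infinity> else ennreal (- ln (1 - p))))"

text \<open>Wasserstein-1 distance between two measures on a common metric space
  (Kantorovich-Rubinstein dual form).\<close>
definition W1 :: "('z::metric_space) measure \<Rightarrow> 'z measure \<Rightarrow> real" where
  "W1 P Q = (SUP f \<in> {f. 1-lipschitz_on (space P) f}.
               \<bar>integral\<^sup>L P f - integral\<^sup>L Q f\<bar>)"

definition Adv :: "('z \<Rightarrow> bool) set \<Rightarrow> 'z measure \<Rightarrow> 'z measure \<Rightarrow> real" where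
  "Adv F P1 P0 = (SUP f \<in> F. \<bar>measure P1 {z \<in> space P1. f z} - measure P0 {z \<in> space P0. f z}\<bar>)"

end

theory Submission
  imports Defs
begin

lemma card_floor_set:
  fixes r :: real assumes "0 \<le> r" "r \<le> real n"
  shows "card {k\<in>{1..n}. real k \<le> r} = nat \<lfloor>r\<rfloor>"
proof -
  have "{k\<in>{1..n}. real k \<le> r} = {1..nat \<lfloor>r\<rfloor>}"
  proof (intro set_eqI iffI)
    fix k assume "k \<in> {k\<in>{1..n}. real k \<le> r}"
    then show "k \<in> {1..nat \<lfloor>r\<rfloor>}"
      by (auto simp: le_nat_floor)
  next
    fix k assume k: "k \<in> {1..nat \<lfloor>r\<rfloor>}"
    then have "k \<le> nat \<lfloor>r\<rfloor>" by simp
    moreover have "0 \<le> \<lfloor>r\<rfloor>" using assms by simp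
    ultimately have "int k \<le> \<lfloor>r\<rfloor>" by (simp add: le_nat_iff)
    then have kr: "real k \<le> r" by (simp add: le_floor_iff)
    moreover have "k \<le> n" using kr assms by linarith
    ultimately show "k \<in> {k\<in>{1..n}. real k \<le> r}" using k by auto
  qed
  then show ?thesis by simp
qed

lemma disc_bound:
  fixes P Q :: "'a measure" and u :: "'a \<Rightarrow> real"
  assumes P: "prob_space P" and Q: "prob_space Q" and sets: "sets P = sets Q"
    and um: "u \<in> borel_measurable P"
    and ub: "\<And>x. x \<in> space P \<Longrightarrow> 0 \<le> u x \<and> u x \<le> 1"
    and a: "\<And>t. \<bar>measure P {x\<in>space P. t \<le> u x} - measure Q {x\<in>space Q. t \<le> u x}\<bar> \<le> a"
  shows "\<bar>integral\<^sup>L P u - integral\<^sup>L Q u\<bar> \<le> a"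
proof -
  interpret P: prob_space P by (rule P)
  interpret Q: prob_space Q by (rule Q)
  have sp: "space Q = space P" using sets by (rule sets_eq_imp_space_eq[symmetric])
  have umQ: "u \<in> borel_measurable Q" using um measurable_cong_sets[OF sets refl] by blast
  have ubQ: "\<And>x. x \<in> space Q \<Longrightarrow> 0 \<le> u x \<and> u x \<le> 1" using ub sp by auto
  have iP: "integrable P u" by (rule P.integrable_const_bound[where B=1]) (use ub um in auto)
  have iQ: "integrable Q u" by (rule Q.integrable_const_bound[where B=1]) (use ubQ umQ in auto)
  have key: "\<bar>integral\<^sup>L P u - integral\<^sup>L Q u\<bar> \<le> a + 2 / real n" if n: "n > 0" for n :: nat
  proof -
    define S where "S k = {x\<in>space P. real k \<le> real n * u x}" for k :: nat
    define s where "s x = (\<Sum>k\<in>{1..n}. indicator (S k) x) / real n" for x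
    have SP: "S k \<in> sets P" for k unfolding S_def using um by measurable
    have SQ: "S k \<in> sets Q" for k using SP sets by simp
    have s_eq: "s x = real (nat \<lfloor>real n * u x\<rfloor>) / real n" if x: "x \<in> space P" for x
    proof -
      have "(\<Sum>k\<in>{1..n}. indicator (S k) x) = (\<Sum>k\<in>{k\<in>{1..n}. real k \<le> real n * u x}. 1::real)"
        using x by (simp add: S_def indicator_def sum.If_cases Int_def)
      also have "\<dots> = real (nat \<lfloor>real n * u x\<rfloor>)"
      proof -
        have "0 \<le> real n * u x" "real n * u x \<le> real n"
          using ub[OF x] by (auto simp: mult_left_le)
        from card_floor_set[OF this] show ?thesis by simp
      qed
      finally show ?thesis by (simp add: s_def)
    qed
    have s_bd: "u x - 1 / real n \<le> s x \<and> s x \<le> u x" if x: "x \<in> space P" for x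
    proof -
      have nn: "0 \<le> \<lfloor>real n * u x\<rfloor>" using ub[OF x] by simp
      have "real n * u x - 1 \<le> real (nat \<lfloor>real n * u x\<rfloor>)"
        and "real (nat \<lfloor>real n * u x\<rfloor>) \<le> real n * u x" using nn by linarith+
      note h = this
      have "(real n * u x - 1) / real n \<le> real (nat \<lfloor>real n * u x\<rfloor>) / real n"
        using h(1) by (rule divide_right_mono) simp
      moreover have "real (nat \<lfloor>real n * u x\<rfloor>) / real n \<le> (real n * u x) / real n"
        using h(2) by (rule divide_right_mono) simp
      moreover have "u x - 1 / real n = (real n * u x - 1) / real n" "(real n * u x) / real n = u x"
        using n by (auto simp: field_simps)
      ultimately show ?thesis by (simp add: s_eq[OF x])
    qed
    have intP: "integral\<^sup>L P s = (\<Sum>k\<in>{1..n}. measure P (S k)) / real n"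
    proof -
      have "integral\<^sup>L P (\<lambda>x. \<Sum>k\<in>{1..n}. indicator (S k) x :: real) = (\<Sum>k\<in>{1..n}. integral\<^sup>L P (indicator (S k)))"
        using SP by (intro Bochner_Integration.integral_sum integrable_real_indicator) (auto simp: less_top[symmetric])
      also have "\<dots> = (\<Sum>k\<in>{1..n}. measure P (S k))"
        using SP by (simp add: Int_absorb2 sets.sets_into_space)
      finally show ?thesis unfolding s_def by (simp only: integral_divide_zero)
    qed
    have intQ: "integral\<^sup>L Q s = (\<Sum>k\<in>{1..n}. measure Q (S k)) / real n"
    proof -
      have "integral\<^sup>L Q (\<lambda>x. \<Sum>k\<in>{1..n}. indicator (S k) x :: real) = (\<Sum>k\<in>{1..n}. integral\<^sup>L Q (indicator (S k)))"
        using SQ by (intro Bochner_Integration.integral_sum integrable_real_indicator) (auto simp: less_top[symmetric])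
      also have "\<dots> = (\<Sum>k\<in>{1..n}. measure Q (S k))"
        using SQ by (simp add: Int_absorb2 sets.sets_into_space)
      finally show ?thesis unfolding s_def by (simp only: integral_divide_zero)
    qed
    have SQ': "S k = {x\<in>space Q. real k / real n \<le> u x}" for k
      unfolding S_def sp using n by (auto simp: field_simps)
    have SP': "S k = {x\<in>space P. real k / real n \<le> u x}" for k
      unfolding S_def using n by (auto simp: field_simps)
    have "\<bar>(\<Sum>k\<in>{1..n}. measure P (S k)) - (\<Sum>k\<in>{1..n}. measure Q (S k))\<bar>
          \<le> (\<Sum>k\<in>{1..n}. \<bar>measure P (S k) - measure Q (S k)\<bar>)"
      by (simp add: sum_subtractf[symmetric] sum_abs)
    also have "\<dots> \<le> (\<Sum>k\<in>{1..n}. a)"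
      by (rule sum_mono) (metis SP' SQ' a)
    also have "\<dots> = real n * a" by simp
    finally have ds: "\<bar>integral\<^sup>L P s - integral\<^sup>L Q s\<bar> \<le> a"
      using n by (simp add: intP intQ diff_divide_distrib[symmetric] field_simps)
    have sm: "s \<in> borel_measurable P" unfolding s_def using SP by measurable
    have smQ: "s \<in> borel_measurable Q" using sm measurable_cong_sets[OF sets refl] by blast
    have s_nn: "0 \<le> s x" if "x \<in> space P" for x
      using s_eq[OF that] by simp
    have isP: "integrable P s" by (rule P.integrable_const_bound[where B=1])
        (use s_bd ub sm s_nn in \<open>fastforce intro!: AE_I2 simp: abs_le_iff\<close>)+
    have isQ: "integrable Q s" by (rule Q.integrable_const_bound[where B=1])
        (use s_bd ub smQ s_nn sp in \<open>fastforce intro!: AE_I2 simp: abs_le_iff\<close>)+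
    have eP: "\<bar>integral\<^sup>L P u - integral\<^sup>L P s\<bar> \<le> 1 / real n"
    proof -
      have "integral\<^sup>L P u - integral\<^sup>L P s = integral\<^sup>L P (\<lambda>x. u x - s x)"
        using iP isP by simp
      moreover have "0 \<le> integral\<^sup>L P (\<lambda>x. u x - s x)"
        using s_bd by (intro integral_nonneg_AE AE_I2) auto
      moreover have "integral\<^sup>L P (\<lambda>x. u x - s x) \<le> integral\<^sup>L P (\<lambda>x. 1 / real n)"
        using s_bd iP isP by (intro integral_mono) (auto, smt (verit))
      ultimately show ?thesis by (simp add: P.prob_space)
    qed
    have eQ: "\<bar>integral\<^sup>L Q u - integral\<^sup>L Q s\<bar> \<le> 1 / real n"
    proof -
      have "integral\<^sup>L Q u - integral\<^sup>L Q s = integral\<^sup>L Q (\<lambda>x. u x - s x)"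
        using iQ isQ by simp
      moreover have "0 \<le> integral\<^sup>L Q (\<lambda>x. u x - s x)"
        using s_bd sp by (intro integral_nonneg_AE AE_I2) auto
      moreover have "integral\<^sup>L Q (\<lambda>x. u x - s x) \<le> integral\<^sup>L Q (\<lambda>x. 1 / real n)"
        using s_bd iQ isQ sp by (intro integral_mono) (auto, smt (verit))
      ultimately show ?thesis by (simp add: Q.prob_space)
    qed
    show ?thesis using eP eQ ds by linarith
  qed
  show ?thesis
  proof (rule ccontr)
    assume "\<not> ?thesis"
    then have pos: "0 < (\<bar>integral\<^sup>L P u - integral\<^sup>L Q u\<bar> - a) / 2" by simp
    obtain n :: nat where n: "0 < n" "1 / real n < (\<bar>integral\<^sup>L P u - integral\<^sup>L Q u\<bar> - a) / 2"
      using ex_inverse_of_nat_less[OF pos] by (auto simp: field_simps)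
    have e2: "2 / real n = 2 * (1 / real n)" by simp
    have k2: "\<bar>integral\<^sup>L P u - integral\<^sup>L Q u\<bar> \<le> a + 2 * (1 / real n)"
      using key[OF n(1)] unfolding e2 .
    define d where "d = \<bar>integral\<^sup>L P u - integral\<^sup>L Q u\<bar>"
    define e where "e = 1 / real n"
    have "d \<le> a + 2 * e" "e < (d - a) / 2" using k2 n(2) unfolding d_def e_def by auto
    then show False by (simp add: field_simps)
  qed
qed
lemma Adv_upper:
  fixes P Q :: "'z measure"
  assumes "prob_space P" "prob_space Q" "g \<in> F"
  shows "\<bar>measure Q {z\<in>space Q. g z} - measure P {z\<in>space P. g z}\<bar> \<le> Adv F Q P"
  unfolding Adv_def
proof (rule cSUP_upper[OF assms(3)])
  interpret P: prob_space P by fact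
  interpret Q: prob_space Q by fact
  show "bdd_above ((\<lambda>f. \<bar>measure Q {z \<in> space Q. f z} - measure P {z \<in> space P. f z}\<bar>) ` F)"
  proof (rule bdd_aboveI[where M=1], clarify)
    fix f
    have "measure Q {z \<in> space Q. f z} \<le> 1" "measure P {z \<in> space P. f z} \<le> 1"
      "0 \<le> measure Q {z \<in> space Q. f z}" "0 \<le> measure P {z \<in> space P. f z}"
      by (auto simp: P.prob_le_1 Q.prob_le_1)
    then show "\<bar>measure Q {z \<in> space Q. f z} - measure P {z \<in> space P. f z}\<bar> \<le> 1" by linarith
  qed
qed

lemma lip_bound:
  fixes P Q :: "'z::real_normed_vector measure" and f :: "'z \<Rightarrow> real"
  assumes P: "prob_space P" and Q: "prob_space Q"
    and sP: "sets P = sets (restrict_space borel Zs)" and sQ: "sets Q = sets (restrict_space borel Zs)"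
    and R: "\<forall>z\<in>Zs. norm z \<le> R"
    and f: "1-lipschitz_on Zs f"
  shows "\<bar>integral\<^sup>L P f - integral\<^sup>L Q f\<bar> \<le> 2 * R *
     Adv {g :: 'z \<Rightarrow> bool. g \<in> measurable (restrict_space borel Zs) (count_space UNIV)} Q P"
proof -
  interpret P: prob_space P by (rule P)
  interpret Q: prob_space Q by (rule Q)
  define FA where "FA = {g :: 'z \<Rightarrow> bool. g \<in> measurable (restrict_space borel Zs) (count_space UNIV)}"
  have spP: "space P = Zs" using sets_eq_imp_space_eq[OF sP] by (simp add: space_restrict_space)
  have spQ: "space Q = Zs" using sets_eq_imp_space_eq[OF sQ] by (simp add: space_restrict_space)
  have ne: "Zs \<noteq> {}" using P.not_empty spP by simp
  then obtain z0 where z0: "z0 \<in> Zs" by blast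
  have osc: "f z - f w \<le> 2 * R" if "z \<in> Zs" "w \<in> Zs" for z w
  proof -
    have "f z - f w \<le> dist (f z) (f w)" by (simp add: dist_real_def)
    also have "\<dots> \<le> 1 * dist z w" using lipschitz_onD[OF f that] .
    also have "\<dots> \<le> norm z + norm w" by (simp add: dist_norm norm_triangle_ineq4)
    also have "\<dots> \<le> 2 * R" using R that by (smt (verit))
    finally show ?thesis .
  qed
  have "norm z0 \<le> R" using R z0 by blast
  then have R0: "0 \<le> R" using norm_ge_zero[of z0] by linarith
  define m where "m = Inf (f ` Zs)"
  have bdd: "bdd_below (f ` Zs)"
    by (rule bdd_belowI[where m="f z0 - 2 * R"]) (use osc z0 in force)
  have m_le: "m \<le> f z" if "z \<in> Zs" for z
    unfolding m_def using bdd that by (simp add: cInf_lower)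
  have m_ge: "f z - 2 * R \<le> m" if "z \<in> Zs" for z
    unfolding m_def
  proof (rule cInf_greatest)
    show "f ` Zs \<noteq> {}" using ne by simp
    fix y assume "y \<in> f ` Zs"
    then obtain w where w: "w \<in> Zs" "y = f w" by blast
    show "f z - 2 * R \<le> y" using osc[OF that w(1)] w(2) by linarith
  qed
  have fm: "f \<in> borel_measurable (restrict_space borel Zs)"
    by (rule borel_measurable_continuous_on_restrict[OF lipschitz_on_continuous_on[OF f]])
  have fmP: "f \<in> borel_measurable P" using fm measurable_cong_sets[OF sP refl] by blast
  have fmQ: "f \<in> borel_measurable Q" using fm measurable_cong_sets[OF sQ refl] by blast
  have Adv0: "0 \<le> Adv FA Q P"
    using Adv_upper[OF P Q, of "\<lambda>_. True" FA] by (auto simp: FA_def)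
  show ?thesis
  proof (cases "R = 0")
    case True
    have "f z = m" if "z \<in> Zs" for z using m_le[OF that] m_ge[OF that] True by simp
    note fc = this
    have "integral\<^sup>L P f = integral\<^sup>L P (\<lambda>_. m)"
      by (rule Bochner_Integration.integral_cong) (auto simp: spP fc)
    moreover have "integral\<^sup>L Q f = integral\<^sup>L Q (\<lambda>_. m)"
      by (rule Bochner_Integration.integral_cong) (auto simp: spQ fc)
    ultimately have "integral\<^sup>L P f = m" "integral\<^sup>L Q f = m" by (simp_all add: P.prob_space Q.prob_space)
    then show ?thesis using True by simp
  next
    case False
    with R0 have Rp: "0 < R" by simp
    define u where "u z = (f z - m) / (2 * R)" for z
    have ub: "0 \<le> u z \<and> u z \<le> 1" if "z \<in> Zs" for z
      using m_le[OF that] m_ge[OF that] Rp by (auto simp: u_def field_simps)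
    have umP: "u \<in> borel_measurable P" unfolding u_def using fmP by measurable
    have a: "\<bar>measure P {x\<in>space P. t \<le> u x} - measure Q {x\<in>space Q. t \<le> u x}\<bar> \<le> Adv FA Q P" for t
    proof -
      have "(\<lambda>z. t \<le> u z) \<in> FA"
      proof -
        have "u \<in> borel_measurable (restrict_space borel Zs)" unfolding u_def using fm by measurable
        then have "(\<lambda>z. t \<le> u z) \<in> measurable (restrict_space borel Zs) (count_space UNIV)"
          by measurable
        then show ?thesis unfolding FA_def by simp
      qed
      from Adv_upper[OF P Q this] show ?thesis by linarith
    qed
    have dU: "\<bar>integral\<^sup>L P u - integral\<^sup>L Q u\<bar> \<le> Adv FA Q P"
      by (rule disc_bound[OF P Q _ umP _ a]) (use sP sQ ub spP in auto)
    have iuP: "integrable P u" by (rule P.integrable_const_bound[where B=1]) (use ub spP umP in auto)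
    have umQ: "u \<in> borel_measurable Q" unfolding u_def using fmQ by measurable
    have iuQ: "integrable Q u" by (rule Q.integrable_const_bound[where B=1]) (use ub spQ umQ in auto)
    have fu: "f z = m + 2 * R * u z" if "z \<in> Zs" for z using Rp by (simp add: u_def)
    have "integral\<^sup>L P f = integral\<^sup>L P (\<lambda>z. m + 2 * R * u z)"
      by (rule Bochner_Integration.integral_cong) (auto simp: spP fu)
    also have "\<dots> = m + 2 * R * integral\<^sup>L P u" using iuP by (simp add: P.prob_space)
    finally have eP: "integral\<^sup>L P f = m + 2 * R * integral\<^sup>L P u" .
    have "integral\<^sup>L Q f = integral\<^sup>L Q (\<lambda>z. m + 2 * R * u z)"
      by (rule Bochner_Integration.integral_cong) (auto simp: spQ fu)
    also have "\<dots> = m + 2 * R * integral\<^sup>L Q u" using iuQ by (simp add: Q.prob_space)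
    finally have eQ: "integral\<^sup>L Q f = m + 2 * R * integral\<^sup>L Q u" .
    have "\<bar>integral\<^sup>L P f - integral\<^sup>L Q f\<bar> = 2 * R * \<bar>integral\<^sup>L P u - integral\<^sup>L Q u\<bar>"
      using Rp by (simp add: eP eQ abs_mult right_diff_distrib[symmetric])
    also have "\<dots> \<le> 2 * R * Adv FA Q P" using dU Rp by simp
    finally show ?thesis unfolding FA_def .
  qed
qed

lemma xent_lower:
  assumes "0 \<le> p" "p \<le> 1"
  shows "ennreal \<bar>(if y then 1 else 0) - p\<bar> \<le> xent y p"
proof (cases y)
  case True
  show ?thesis
  proof (cases "p = 0")
    case False
    then have "0 < p" using assms by simp
    then have "ln p \<le> p - 1" by (rule ln_le_minus_one)
    then show ?thesis using True False assms by (auto simp: xent_def intro!: ennreal_leI)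
  qed (simp add: xent_def True)
next
  case False
  show ?thesis
  proof (cases "p = 1")
    case F: False
    then have "0 < 1 - p" using assms by simp
    then have "ln (1 - p) \<le> (1 - p) - 1" by (rule ln_le_minus_one)
    then show ?thesis using False F assms by (auto simp: xent_def intro!: ennreal_leI)
  qed (simp add: xent_def False)
qed

lemma err_lower:
  fixes N :: "'w measure" and Y :: "'w \<Rightarrow> bool" and q :: "'w \<Rightarrow> real"
  assumes N: "prob_space N" and Y: "Y \<in> measurable N (count_space UNIV)"
    and q: "q \<in> borel_measurable N" and qb: "\<And>\<omega>. \<omega> \<in> space N \<Longrightarrow> 0 \<le> q \<omega> \<and> q \<omega> \<le> 1"
  shows "ennreal \<bar>measure N {\<omega>\<in>space N. Y \<omega>} - integral\<^sup>L N q\<bar> \<le> (\<integral>\<^sup>+ \<omega>. xent (Y \<omega>) (q \<omega>) \<partial>N)"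
proof -
  interpret N: prob_space N by (rule N)
  define y where "y \<omega> = (if Y \<omega> then 1 else 0 :: real)" for \<omega>
  have ym: "y \<in> borel_measurable N" unfolding y_def using Y by measurable
  have iy: "integrable N y" by (rule N.integrable_const_bound[where B=1]) (use ym in \<open>auto simp: y_def\<close>)
  have iq: "integrable N q" by (rule N.integrable_const_bound[where B=1]) (use q qb in auto)
  have Yset: "{\<omega>\<in>space N. Y \<omega>} \<in> sets N" using Y by measurable
  have "measure N {\<omega>\<in>space N. Y \<omega>} = integral\<^sup>L N (indicator {\<omega>\<in>space N. Y \<omega>})"
    by (simp add: Int_absorb2 subset_iff)
  also have "\<dots> = integral\<^sup>L N y"
    by (rule Bochner_Integration.integral_cong) (auto simp: y_def indicator_def)
  finally have my: "measure N {\<omega>\<in>space N. Y \<omega>} = integral\<^sup>L N y" .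
  have "\<bar>measure N {\<omega>\<in>space N. Y \<omega>} - integral\<^sup>L N q\<bar> = \<bar>integral\<^sup>L N (\<lambda>\<omega>. y \<omega> - q \<omega>)\<bar>"
    using iy iq by (simp add: my)
  also have "\<dots> \<le> integral\<^sup>L N (\<lambda>\<omega>. \<bar>y \<omega> - q \<omega>\<bar>)" by (rule integral_abs_bound)
  finally have "ennreal \<bar>measure N {\<omega>\<in>space N. Y \<omega>} - integral\<^sup>L N q\<bar> \<le> ennreal (integral\<^sup>L N (\<lambda>\<omega>. \<bar>y \<omega> - q \<omega>\<bar>))"
    by (rule ennreal_leI)
  also have "\<dots> = (\<integral>\<^sup>+ \<omega>. ennreal \<bar>y \<omega> - q \<omega>\<bar> \<partial>N)"
    by (rule nn_integral_eq_integral[symmetric]) (use iy iq in auto)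
  also have "\<dots> \<le> (\<integral>\<^sup>+ \<omega>. xent (Y \<omega>) (q \<omega>) \<partial>N)"
    by (rule nn_integral_mono) (use qb xent_lower in \<open>auto simp: y_def\<close>)
  finally show ?thesis .
qed

lemma lip_W1:
  fixes P Q :: "'z::real_normed_vector measure" and h :: "'z \<Rightarrow> real"
  assumes P: "prob_space P" and Q: "prob_space Q"
    and sP: "sets P = sets (restrict_space borel Zs)" and sQ: "sets Q = sets (restrict_space borel Zs)"
    and R: "\<forall>z\<in>Zs. norm z \<le> R"
    and h: "C-lipschitz_on Zs h"
  shows "\<bar>integral\<^sup>L P h - integral\<^sup>L Q h\<bar> \<le> C * W1 P Q"
    and "W1 P Q \<le> 2 * R *
     Adv {g :: 'z \<Rightarrow> bool. g \<in> measurable (restrict_space borel Zs) (count_space UNIV)} Q P"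
proof -
  interpret P: prob_space P by (rule P)
  interpret Q: prob_space Q by (rule Q)
  have spP: "space P = Zs" using sets_eq_imp_space_eq[OF sP] by (simp add: space_restrict_space)
  have spQ: "space Q = Zs" using sets_eq_imp_space_eq[OF sQ] by (simp add: space_restrict_space)
  define L where "L = {f :: 'z \<Rightarrow> real. 1-lipschitz_on (space P) f}"
  define B where "B = 2 * R * Adv {g :: 'z \<Rightarrow> bool. g \<in> measurable (restrict_space borel Zs) (count_space UNIV)} Q P"
  have bnd: "\<bar>integral\<^sup>L P f - integral\<^sup>L Q f\<bar> \<le> B" if "f \<in> L" for f
    unfolding B_def by (rule lip_bound[OF P Q sP sQ R]) (use that in \<open>simp add: L_def spP\<close>)
  have W1eq: "W1 P Q = (SUP f \<in> L. \<bar>integral\<^sup>L P f - integral\<^sup>L Q f\<bar>)"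
    unfolding W1_def L_def ..
  have Lne: "(\<lambda>_. 0) \<in> L" by (simp add: L_def lipschitz_on_def)
  have bdd: "bdd_above ((\<lambda>f. \<bar>integral\<^sup>L P f - integral\<^sup>L Q f\<bar>) ` L)"
    using bnd by (intro bdd_aboveI[where M=B]) auto
  show "W1 P Q \<le> B" unfolding W1eq
    by (rule cSUP_least) (use Lne bnd in auto)
  show "\<bar>integral\<^sup>L P h - integral\<^sup>L Q h\<bar> \<le> C * W1 P Q"
  proof (cases "C = 0")
    case True
    obtain z0 where z0: "z0 \<in> Zs" using P.not_empty spP by auto
    have fc: "h z = h z0" if "z \<in> Zs" for z
      using lipschitz_onD[OF h that z0] True by simp
    have "integral\<^sup>L P h = integral\<^sup>L P (\<lambda>_. h z0)"
      by (rule Bochner_Integration.integral_cong) (auto simp: spP fc)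
    moreover have "integral\<^sup>L Q h = integral\<^sup>L Q (\<lambda>_. h z0)"
      by (rule Bochner_Integration.integral_cong) (auto simp: spQ fc)
    ultimately show ?thesis using True by (simp add: P.prob_space Q.prob_space)
  next
    case False
    with lipschitz_on_nonneg[OF h] have Cp: "0 < C" by simp
    have "(\<lambda>z. h z / C) \<in> L"
      unfolding L_def spP lipschitz_on_def
    proof (intro CollectI conjI ballI)
      fix x y assume "x \<in> Zs" "y \<in> Zs"
      from lipschitz_onD[OF h this] have "dist (h x) (h y) \<le> C * dist x y" .
      then show "dist (h x / C) (h y / C) \<le> 1 * dist x y"
        using Cp by (simp add: dist_real_def field_simps abs_divide
            flip: diff_divide_distrib)
    qed simp
    from cSUP_upper[OF this bdd] have "\<bar>integral\<^sup>L P h / C - integral\<^sup>L Q h / C\<bar> \<le> W1 P Q"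
      unfolding W1eq by simp
    then have "\<bar>integral\<^sup>L P h - integral\<^sup>L Q h\<bar> / C \<le> W1 P Q"
      using Cp by (simp add: abs_divide flip: diff_divide_distrib)
    then show ?thesis using Cp by (simp add: field_simps)
  qed
qed

theorem theorem1:
  fixes M :: "'w measure" and SX :: "'x measure"
    and X :: "'w \<Rightarrow> 'x" and A Y :: "'w \<Rightarrow> bool"
    and g :: "'x \<Rightarrow> 'z::euclidean_space" and Zs :: "'z set"
    and R C :: real and h :: "'z \<Rightarrow> real"
  assumes "prob_space M"
    and "X \<in> measurable M SX"
    and "A \<in> measurable M (count_space UNIV)"
    and "Y \<in> measurable M (count_space UNIV)"
    and "0 < measure M {\<omega> \<in> space M. \<not> A \<omega>}"
    and "measure M {\<omega> \<in> space M. \<not> A \<omega>} < 1"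
    and "g \<in> measurable SX (restrict_space borel Zs)"
    and "\<forall>z \<in> Zs. norm z \<le> R"
    and "h \<in> borel_measurable (restrict_space borel Zs)"
    and "\<forall>z \<in> Zs. 0 \<le> h z \<and> h z \<le> 1"
    and "C-lipschitz_on Zs h"
  shows "let D = (\<lambda>a. cond_dist M {\<omega> \<in> space M. A \<omega> = a});
             Zd = (\<lambda>a. distr (D a) (restrict_space borel Zs) (\<lambda>\<omega>. g (X \<omega>)));
             err = (\<lambda>a. \<integral>\<^sup>+ \<omega>. xent (Y \<omega>) (h (g (X \<omega>))) \<partial>(D a));
             \<delta> = \<bar>measure (D False) {\<omega> \<in> space M. Y \<omega>} - measure (D True) {\<omega> \<in> space M. Y \<omega>}\<bar>;
             FA = {f :: 'z \<Rightarrow> bool. f \<in> measurable (restrict_space borel Zs) (count_space UNIV)}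
         in ereal (\<delta> - C * W1 (Zd False) (Zd True)) \<le> enn2ereal (err False + err True)
            \<and> \<delta> - C * W1 (Zd False) (Zd True) \<ge> \<delta> - 2 * R * C * Adv FA (Zd True) (Zd False)"
  proof -
  interpret M: prob_space M by fact
  define D where "D a = cond_dist M {\<omega> \<in> space M. A \<omega> = a}" for a
  define Zd where "Zd a = distr (D a) (restrict_space borel Zs) (\<lambda>\<omega>. g (X \<omega>))" for a
  define err where "err a = (\<integral>\<^sup>+ \<omega>. xent (Y \<omega>) (h (g (X \<omega>))) \<partial>(D a))" for a
  define FA where "FA = {f :: 'z \<Rightarrow> bool. f \<in> measurable (restrict_space borel Zs) (count_space UNIV)}"
  define S where "S a = {\<omega> \<in> space M. A \<omega> = a}" for a
  have Ssets: "S a \<in> sets M" for a unfolding S_def using assms(3) by measurable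
  have p0: "0 < measure M (S False)" using assms(5) by (simp add: S_def)
  have "space M - S False = S True" by (auto simp: S_def)
  then have "measure M (S True) = 1 - measure M (S False)"
    using M.prob_compl[OF Ssets[of False]] by simp
  then have p1: "0 < measure M (S True)" using assms(6) by (simp add: S_def)
  have pa: "0 < measure M (S a)" for a using p0 p1 by (cases a) auto
  have D_eq: "D a = uniform_measure M (S a)" for a
    unfolding D_def S_def cond_dist_def uniform_measure_def ..
  have Dp: "prob_space (D a)" for a
    unfolding D_eq using pa[of a] by (intro prob_space_uniform_measure) (auto simp: M.emeasure_eq_measure)
  have sD: "sets (D a) = sets M" "space (D a) = space M" for a unfolding D_eq by auto
  have gXm: "(\<lambda>\<omega>. g (X \<omega>)) \<in> measurable M (restrict_space borel Zs)"
    using measurable_compose[OF assms(2) assms(7)] .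
  have gXmD: "(\<lambda>\<omega>. g (X \<omega>)) \<in> measurable (D a) (restrict_space borel Zs)" for a
    using gXm measurable_cong_sets[OF sD(1)[of a] refl] by blast
  have Zdp: "prob_space (Zd a)" for a
    unfolding Zd_def by (rule prob_space.prob_space_distr[OF Dp gXmD])
  have sZd: "sets (Zd a) = sets (restrict_space borel Zs)" for a unfolding Zd_def by simp
  have eh: "integral\<^sup>L (Zd a) h = integral\<^sup>L (D a) (\<lambda>\<omega>. h (g (X \<omega>)))" for a
    unfolding Zd_def by (rule integral_distr[OF gXmD assms(9)])
  have gXZs: "g (X \<omega>) \<in> Zs" if "\<omega> \<in> space M" for \<omega>
  proof -
    have "g (X \<omega>) \<in> space (restrict_space borel Zs)"
      using measurable_space[OF gXm that] .
    then show ?thesis by (simp add: space_restrict_space)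
  qed
  have hm: "(\<lambda>\<omega>. h (g (X \<omega>))) \<in> borel_measurable (D a)" for a
    using measurable_compose[OF gXmD assms(9)] .
  have errlow: "ennreal \<bar>measure (D a) {\<omega>\<in>space M. Y \<omega>} - integral\<^sup>L (Zd a) h\<bar> \<le> err a" for a
  proof -
    have "ennreal \<bar>measure (D a) {\<omega>\<in>space (D a). Y \<omega>} - integral\<^sup>L (D a) (\<lambda>\<omega>. h (g (X \<omega>)))\<bar> \<le> err a"
      unfolding err_def
      by (rule err_lower[OF Dp _ hm]) (use assms(4,10) gXZs sD in \<open>auto simp: measurable_cong_sets[OF sD(1) refl]\<close>)
    then show ?thesis by (simp add: eh sD)
  qed
  note W = lip_W1[OF Zdp[of False] Zdp[of True] sZd sZd assms(8) assms(11)]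
  define pF where "pF = measure (D False) {\<omega>\<in>space M. Y \<omega>}"
  define pT where "pT = measure (D True) {\<omega>\<in>space M. Y \<omega>}"
  define eF where "eF = integral\<^sup>L (Zd False) h"
  define eT where "eT = integral\<^sup>L (Zd True) h"
  define w where "w = W1 (Zd False) (Zd True)"
  have W1': "\<bar>eF - eT\<bar> \<le> C * w" using W(1) unfolding eF_def eT_def w_def .
  have "\<bar>pF - pT\<bar> - C * w \<le> \<bar>pF - eF\<bar> + \<bar>pT - eT\<bar>" using W1' by linarith
  then have "ereal (\<bar>pF - pT\<bar> - C * w) \<le> ereal (\<bar>pF - eF\<bar> + \<bar>pT - eT\<bar>)" by simp
  also have "\<dots> = enn2ereal (ennreal \<bar>pF - eF\<bar> + ennreal \<bar>pT - eT\<bar>)"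
    by (simp flip: ennreal_plus)
  also have "\<dots> \<le> enn2ereal (err False + err True)"
    using add_mono[OF errlow[of False] errlow[of True]]
    unfolding pF_def pT_def eF_def eT_def less_eq_ennreal.rep_eq .
  finally have I1: "ereal (\<bar>pF - pT\<bar> - C * w) \<le> enn2ereal (err False + err True)" .
  have C0: "0 \<le> C" using lipschitz_on_nonneg[OF assms(11)] .
  have "C * w \<le> C * (2 * R * Adv FA (Zd True) (Zd False))"
    using mult_left_mono[OF W(2) C0] unfolding w_def FA_def .
  then have I2: "\<bar>pF - pT\<bar> - C * w \<ge> \<bar>pF - pT\<bar> - 2 * R * C * Adv FA (Zd True) (Zd False)"
    by (simp add: algebra_simps)
  show ?thesis
    unfolding Let_def
    using I1 I2 unfolding pF_def pT_def w_def FA_def Zd_def D_def err_def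
    by simp
qed

end
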